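(* Let $\mathcal{A}$ be a central and essential arrangement in $\mathbb{Q}^l$ as in the context, with $\lcm$-period $\rho_0$, and let $\sigma$ be a term ordering. If a prime $p$ is not $(\sigma,l)$-lucky for $\mathcal{A}$, then $p$ divides $\rho_0$.
   Context: $\mathcal{A}=\{H_1,\dots,H_n\}$: $n$ distinct linear hyperplanes in $\mathbb{Q}^l$ with $\bigcap H_i=\{0\}$, $H_i=\{\alpha_i=0\}$, $\alpha_i=\sum_{k=1}^lc_{ki}x_k$ with $c_{ki}\in\mathbb{Z}$ not all divisible by any prime. Let $C=(c_{ki})\in\mathrm{Mat}_{l\times n}(\mathbb{Z})$ with columns $c_1,\dots,c_n$; for nonempty $J=\{i_1<\dots<i_k\}\subseteq[n]$, $C_J=(c_{i_1},\dots,c_{i_k})$, with Smith normal form having nonzero diagonal entries $e_{J,1}\mid\dots\mid e_{J,r}$ (positive), $r=\mathrm{rk}(C_J)$; $e(J)=e_{J,r}$ and $\rho_0=\lcm\{e(J): 1\le|J|\le l\}$. Gröbner notions: for a term ordering $\sigma$ and nonzero $f\in\mathbb{Z}[x_1,\dots,x_l]$, $\mathrm{LM}_\sigma(f)$ is the $\sigma$-leading term times its coefficient $\mathrm{LC}_\sigma(f)$. A minimal strong $\sigma$-Gröbner basis of an ideal $I\subseteq\mathbb{Z}[x_1,\dots,x_l]$ is a finite generating set $G$ of nonzero elements of $I$ such that every nonzero $f\in I$ has $\mathrm{LM}_\sigma(f)$ divisible by some $\mathrm{LM}_\sigma(g)$, $g\in G$, and no $\mathrm{LM}_\sigma(g)$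 divides $\mathrm{LM}_\sigma(g')$ for distinct $g,g'$; its set of leading coefficients is independent of the choice. $p$ is $\sigma$-lucky for $I$ if it divides none of them; $p$ is $(\sigma,l)$-lucky for $\mathcal{A}$ if it is $\sigma$-lucky for every ideal $\langle\alpha_{i_1},\dots,\alpha_{i_l}\rangle\subseteq\mathbb{Z}[x_1,\dots,x_l]$ with $i_1<\dots<i_l$ and $\operatorname{codim}(H_{i_1}\cap\dots\cap H_{i_l})=l$. *)

theory Defs
  imports "HOL-Library.Poly_Mapping" "Jordan_Normal_Form.Matrix" "HOL-Computational_Algebra.Primes"
begin

text \<open>C is an l x n integer matrix; column i (0-based, i < n) gives the linear form alpha_i.
  The hyperplane H_i in Q^l (vectors of dimension l).\<close>

definition hyp :: "int mat \<Rightarrow> nat \<Rightarrow> rat vec set" where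
  "hyp C i = {x. dim_vec x = dim_row C \<and> (\<Sum>k<dim_row C. of_int (C $$ (k, i)) * x $ k) = 0}"

definition primitive_column :: "int mat \<Rightarrow> nat \<Rightarrow> bool" where
  "primitive_column C i \<longleftrightarrow> (\<forall>q::int. prime q \<longrightarrow> \<not> (\<forall>k<dim_row C. q dvd C $$ (k, i)))"

definition central_essential_arr :: "nat \<Rightarrow> nat \<Rightarrow> int mat \<Rightarrow> bool" where
  "central_essential_arr l n C \<longleftrightarrow>
     C \<in> carrier_mat l n \<and>
     inj_on (hyp C) {..<n} \<and>
     (\<forall>i<n. primitive_column C i) \<and>
     {x. dim_vec x = l} \<inter> (\<Inter>i<n. hyp C i) = {0\<^sub>v l}"

definition col_submat :: "int mat \<Rightarrow> nat set \<Rightarrow> int mat" where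
  "col_submat C J = mat (dim_row C) (card J) (\<lambda>(k, j). C $$ (k, sorted_list_of_set J ! j))"

definition is_SNF_last :: "int mat \<Rightarrow> int \<Rightarrow> bool" where
  "is_SNF_last A e \<longleftrightarrow>
     (\<exists>P Q r. P \<in> carrier_mat (dim_row A) (dim_row A) \<and> Q \<in> carrier_mat (dim_col A) (dim_col A) \<and>
        invertible_mat P \<and> invertible_mat Q \<and> 1 \<le> r \<and> r \<le> min (dim_row A) (dim_col A) \<and>
        (let D = P * A * Q in
          (\<forall>i<dim_row A. \<forall>j<dim_col A. i \<noteq> j \<longrightarrow> D $$ (i, j) = 0) \<and>
          (\<forall>i<r. D $$ (i, i) > 0) \<and>
          (\<forall>i. r \<le> i \<and> i < min (dim_row A) (dim_col A) \<longrightarrow> D $$ (i, i) = 0) \<and>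
          (\<forall>i. i + 1 < r \<longrightarrow> D $$ (i, i) dvd D $$ (i + 1, i + 1)) \<and>
          e = D $$ (r - 1, r - 1)))"

definition e_of :: "int mat \<Rightarrow> nat set \<Rightarrow> int" where
  "e_of C J = (SOME e. is_SNF_last (col_submat C J) e)"

definition rho0 :: "nat \<Rightarrow> nat \<Rightarrow> int mat \<Rightarrow> int" where
  "rho0 l n C = Lcm {e_of C J | J. J \<subseteq> {..<n} \<and> J \<noteq> {} \<and> card J \<le> l}"

type_synonym mono = "nat \<Rightarrow>\<^sub>0 nat"
type_synonym zpoly = "mono \<Rightarrow>\<^sub>0 int"

definition monos_l :: "nat \<Rightarrow> mono set" where
  "monos_l l = {m. Poly_Mapping.keys m \<subseteq> {..<l}}"

text \<open>The ring Z[x_0,...,x_(l-1)] inside Z[x_0, x_1, ...].\<close>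
definition zpolys :: "nat \<Rightarrow> zpoly set" where
  "zpolys l = {f. Poly_Mapping.keys f \<subseteq> monos_l l}"

definition Var :: "nat \<Rightarrow> zpoly" where
  "Var k = Poly_Mapping.single (Poly_Mapping.single k 1) 1"

definition lin_form :: "int mat \<Rightarrow> nat \<Rightarrow> zpoly" where
  "lin_form C i = (\<Sum>k<dim_row C. Poly_Mapping.single 0 (C $$ (k, i)) * Var k)"

definition ideal_gen :: "nat \<Rightarrow> zpoly set \<Rightarrow> zpoly set" where
  "ideal_gen l S = {\<Sum>s\<in>S. h s * s | h. \<forall>s\<in>S. h s \<in> zpolys l}"

definition term_order :: "nat \<Rightarrow> (mono \<Rightarrow> mono \<Rightarrow> bool) \<Rightarrow> bool" where
  "term_order l ord \<longleftrightarrow>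
     (\<forall>m\<in>monos_l l. ord m m) \<and>
     (\<forall>m1\<in>monos_l l. \<forall>m2\<in>monos_l l. \<forall>m3\<in>monos_l l. ord m1 m2 \<longrightarrow> ord m2 m3 \<longrightarrow> ord m1 m3) \<and>
     (\<forall>m1\<in>monos_l l. \<forall>m2\<in>monos_l l. ord m1 m2 \<longrightarrow> ord m2 m1 \<longrightarrow> m1 = m2) \<and>
     (\<forall>m1\<in>monos_l l. \<forall>m2\<in>monos_l l. ord m1 m2 \<or> ord m2 m1) \<and>
     (\<forall>m\<in>monos_l l. ord 0 m) \<and>
     (\<forall>m1\<in>monos_l l. \<forall>m2\<in>monos_l l. \<forall>t\<in>monos_l l. ord m1 m2 \<longrightarrow> ord (m1 + t) (m2 + t))"

definition lead_mono :: "(mono \<Rightarrow> mono \<Rightarrow> bool) \<Rightarrow> zpoly \<Rightarrow> mono" where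
  "lead_mono ord f = (THE m. m \<in> Poly_Mapping.keys f \<and> (\<forall>m'\<in>Poly_Mapping.keys f. ord m' m))"

definition lead_coeff_z :: "(mono \<Rightarrow> mono \<Rightarrow> bool) \<Rightarrow> zpoly \<Rightarrow> int" where
  "lead_coeff_z ord f = Poly_Mapping.lookup f (lead_mono ord f)"

definition lm_dvd :: "(mono \<Rightarrow> mono \<Rightarrow> bool) \<Rightarrow> zpoly \<Rightarrow> zpoly \<Rightarrow> bool" where
  "lm_dvd ord g f \<longleftrightarrow>
     (\<forall>v. Poly_Mapping.lookup (lead_mono ord g) v \<le> Poly_Mapping.lookup (lead_mono ord f) v) \<and>
     lead_coeff_z ord g dvd lead_coeff_z ord f"

definition is_min_strong_GB :: "nat \<Rightarrow> (mono \<Rightarrow> mono \<Rightarrow> bool) \<Rightarrow> zpoly set \<Rightarrow> zpoly set \<Rightarrow> bool" where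
  "is_min_strong_GB l ord I G \<longleftrightarrow>
     finite G \<and> G \<subseteq> I \<and> 0 \<notin> G \<and> ideal_gen l G = I \<and>
     (\<forall>f\<in>I. f \<noteq> 0 \<longrightarrow> (\<exists>g\<in>G. lm_dvd ord g f)) \<and>
     (\<forall>g\<in>G. \<forall>g'\<in>G. g \<noteq> g' \<longrightarrow> \<not> lm_dvd ord g g')"

text \<open>p is sigma-lucky for I: p divides none of the leading coefficients of a minimal strong
  Groebner basis (these are independent of the choice, so we quantify over all of them).\<close>
definition sigma_lucky :: "nat \<Rightarrow> (mono \<Rightarrow> mono \<Rightarrow> bool) \<Rightarrow> zpoly set \<Rightarrow> nat \<Rightarrow> bool" where
  "sigma_lucky l ord I p \<longleftrightarrow>
     (\<forall>G. is_min_strong_GB l ord I G \<longrightarrow> (\<forall>g\<in>G. \<not> int p dvd lead_coeff_z ord g))"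

definition sigma_l_lucky :: "nat \<Rightarrow> nat \<Rightarrow> int mat \<Rightarrow> (mono \<Rightarrow> mono \<Rightarrow> bool) \<Rightarrow> nat \<Rightarrow> bool" where
  "sigma_l_lucky l n C ord p \<longleftrightarrow>
     (\<forall>J. J \<subseteq> {..<n} \<and> card J = l \<and> {x. dim_vec x = l} \<inter> (\<Inter>i\<in>J. hyp C i) = {0\<^sub>v l} \<longrightarrow>
        sigma_lucky l ord (ideal_gen l (lin_form C ` J)) p)"

end

theory Submission
  imports Defs "Jordan_Normal_Form.Gauss_Jordan_Elimination" "Jordan_Normal_Form.Determinant"
begin

definition unimod :: "nat \<Rightarrow> int mat \<Rightarrow> bool" where
  "unimod n P \<longleftrightarrow> P \<in> carrier_mat n n \<and> (\<exists>Q \<in> carrier_mat n n. P * Q = 1\<^sub>m n \<and> Q * P = 1\<^sub>m n)"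

lemma unimod_carrier: "unimod n P \<Longrightarrow> P \<in> carrier_mat n n"
  unfolding unimod_def by blast

lemma unimod_one: "unimod n (1\<^sub>m n)"
  unfolding unimod_def by (intro conjI bexI[of _ "1\<^sub>m n"]) auto

lemma unimod_mult: assumes "unimod n P" "unimod n Q" shows "unimod n (P*Q)"
proof -
  obtain P' where P: "P \<in> carrier_mat n n" "P' \<in> carrier_mat n n" "P*P' = 1\<^sub>m n" "P'*P = 1\<^sub>m n"
    using assms(1) unfolding unimod_def by blast
  obtain Q' where Q: "Q \<in> carrier_mat n n" "Q' \<in> carrier_mat n n" "Q*Q' = 1\<^sub>m n" "Q'*Q = 1\<^sub>m n"
    using assms(2) unfolding unimod_def by blast
  have 1: "P*Q*(Q'*P') = 1\<^sub>m n"
  proof -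
    have "P*Q*(Q'*P') = P*(Q*(Q'*P'))" using P Q by (meson assoc_mult_mat mult_carrier_mat)
    also have "Q*(Q'*P') = (Q*Q')*P'" using P Q by (metis assoc_mult_mat)
    finally show ?thesis using P Q by simp
  qed
  have 2: "(Q'*P')*(P*Q) = 1\<^sub>m n"
  proof -
    have "(Q'*P')*(P*Q) = Q'*(P'*(P*Q))" using P Q by (meson assoc_mult_mat mult_carrier_mat)
    also have "P'*(P*Q) = (P'*P)*Q" using P Q by (metis assoc_mult_mat)
    finally show ?thesis using P Q by simp
  qed
  show ?thesis unfolding unimod_def using 1 2 P Q by (intro conjI bexI[of _ "Q'*P'"]) auto
qed

lemma unimod_swap: "k < n \<Longrightarrow> l < n \<Longrightarrow> unimod n (swaprows_mat n k l)"
  unfolding unimod_def using swaprows_mat_inv by (intro conjI bexI[of _ "swaprows_mat n k l"]) auto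

lemma unimod_addrow: "k < n \<Longrightarrow> l < n \<Longrightarrow> k \<noteq> l \<Longrightarrow> unimod n (addrow_mat n a k l)"
  unfolding unimod_def using addrow_mat_inv[of k n l a] addrow_mat_inv[of k n l "-a"]
  by (intro conjI bexI[of _ "addrow_mat n (-a) k l"]) auto

lemma unimod_invertible: "unimod n P \<Longrightarrow> invertible_mat P"
  unfolding unimod_def invertible_mat_def inverts_mat_def square_mat.simps by auto

lemma unimod_det: "unimod n P \<Longrightarrow> det P \<noteq> 0"
proof -
  assume "unimod n P"
  then obtain Q where "P \<in> carrier_mat n n" "Q \<in> carrier_mat n n" "P*Q = 1\<^sub>m n"
    unfolding unimod_def by blast
  then have "det P * det Q = 1" using det_mult[of P n Q] by simp
  then show ?thesis by auto
qed

lemma swap_left: "(A :: int mat) \<in> carrier_mat n nc \<Longrightarrow> k<n \<Longrightarrow> l<n \<Longrightarrow> i<n \<Longrightarrow> j<nc \<Longrightarrow>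
  (swaprows_mat n k l * A) $$ (i,j) = A $$ (if i = k then l else if i = l then k else i, j)"
  using swaprows_mat[of A n nc k l, symmetric] by auto

lemma swap_right: "(A :: int mat) \<in> carrier_mat nr n \<Longrightarrow> k<n \<Longrightarrow> l<n \<Longrightarrow> i<nr \<Longrightarrow> j<n \<Longrightarrow>
  (A * swaprows_mat n k l) $$ (i,j) = A $$ (i, if j = k then l else if j = l then k else j)"
proof -
  assume a: "A \<in> carrier_mat nr n" "k<n" "l<n" "i<nr" "j<n"
  define s where "s = (if j = k then l else if j = l then k else j)"
  have s: "s < n" using a unfolding s_def by auto
  have c: "col (swaprows_mat n k l) j = unit_vec n s"
    using a by (intro eq_vecI) (auto simp: s_def)
  have "(A * swaprows_mat n k l) $$ (i,j) = row A i \<bullet> col (swaprows_mat n k l) j" using a by simp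
  also have "\<dots> = row A i \<bullet> unit_vec n s" by (simp only: c)
  also have "\<dots> = row A i $ s" by (rule scalar_prod_right_unit[OF s])
  also have "\<dots> = A $$ (i,s)" using a s by simp
  finally show ?thesis unfolding s_def .
qed

lemma addrow_left: "(A :: int mat) \<in> carrier_mat n nc \<Longrightarrow> k<n \<Longrightarrow> l<n \<Longrightarrow> i<n \<Longrightarrow> j<nc \<Longrightarrow>
  (addrow_mat n a k l * A) $$ (i,j) = (if i = k then a * A $$ (l,j) + A $$ (i,j) else A $$ (i,j))"
  using addrow_mat[of A n nc l a k, symmetric] by auto

lemma addrow_right: "(A :: int mat) \<in> carrier_mat nr n \<Longrightarrow> k<n \<Longrightarrow> l<n \<Longrightarrow> i<nr \<Longrightarrow> j<n \<Longrightarrow>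
  (A * addrow_mat n a k l) $$ (i,j) = (if j = l then A $$ (i,j) + a * A $$ (i,k) else A $$ (i,j))"
proof -
  assume a: "A \<in> carrier_mat nr n" "k<n" "l<n" "i<nr" "j<n"
  have c: "col (addrow_mat n a k l) j = unit_vec n j + (if j = l then a \<cdot>\<^sub>v unit_vec n k else 0\<^sub>v n)"
    using a by (intro eq_vecI) (auto simp: ac_simps)
  have r: "row A i \<in> carrier_vec n" using a by auto
  have sm: "row A i \<bullet> (a \<cdot>\<^sub>v unit_vec n k) = a * A $$ (i,k)" using a
    by (subst scalar_prod_smult_right) auto
  show ?thesis using a r sm
    by (auto simp: c scalar_prod_add_distrib[of _ n] scalar_prod_smult_right add.commute)
qed

definition mequiv :: "nat \<Rightarrow> int mat \<Rightarrow> int mat \<Rightarrow> bool" where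
  "mequiv n A B \<longleftrightarrow> (\<exists>P Q. unimod n P \<and> unimod n Q \<and> B = P * A * Q)"

lemma mequiv_refl: "A \<in> carrier_mat n n \<Longrightarrow> mequiv n A A"
  unfolding mequiv_def using unimod_one[of n]
  by (intro exI[of _ "1\<^sub>m n"] conjI) auto

lemma mequiv_carrier: "A \<in> carrier_mat n n \<Longrightarrow> mequiv n A B \<Longrightarrow> B \<in> carrier_mat n n"
proof -
  assume "A \<in> carrier_mat n n" "mequiv n A B"
  then obtain P Q where "unimod n P" "unimod n Q" "B = P * A * Q" unfolding mequiv_def by blast
  then show ?thesis using unimod_carrier \<open>A \<in> carrier_mat n n\<close> by (metis mult_carrier_mat)
qed

lemma mequiv_left: assumes A: "A \<in> carrier_mat n n" and "mequiv n A B" and T: "unimod n T"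
  shows "mequiv n A (T * B)"
proof -
  obtain P Q where PQ: "unimod n P" "unimod n Q" "B = P * A * Q" using assms(2) unfolding mequiv_def by blast
  have c: "P \<in> carrier_mat n n" "Q \<in> carrier_mat n n" "T \<in> carrier_mat n n" using PQ T unimod_carrier by auto
  have "T * B = (T * P) * A * Q" using c A unfolding PQ(3) by (simp add: assoc_mult_mat[of _ n n _ n _ n])
  then show ?thesis unfolding mequiv_def using PQ T unimod_mult by blast
qed

lemma mequiv_right: assumes A: "A \<in> carrier_mat n n" and "mequiv n A B" and T: "unimod n T"
  shows "mequiv n A (B * T)"
proof -
  obtain P Q where PQ: "unimod n P" "unimod n Q" "B = P * A * Q" using assms(2) unfolding mequiv_def by blast
  have c: "P \<in> carrier_mat n n" "Q \<in> carrier_mat n n" "T \<in> carrier_mat n n" using PQ T unimod_carrier by auto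
  have "B * T = P * A * (Q * T)" using c A unfolding PQ(3) by (simp add: assoc_mult_mat[of _ n n _ n _ n])
  then show ?thesis unfolding mequiv_def using PQ T unimod_mult by blast
qed

lemma KL:
  assumes A: "A \<in> carrier_mat (Suc n) (Suc n)" and nz: "A \<noteq> 0\<^sub>m (Suc n) (Suc n)"
  shows "\<exists>B. mequiv (Suc n) A B \<and> B $$ (0,0) \<noteq> 0 \<and> (\<forall>i<Suc n. \<forall>j<Suc n. B $$ (0,0) dvd B $$ (i,j)) \<and>
     (\<forall>i. 0 < i \<and> i < Suc n \<longrightarrow> B $$ (i,0) = 0 \<and> B $$ (0,i) = 0)"
proof -
  let ?m = "Suc n"
  obtain i j where ij: "i < ?m" "j < ?m" "A $$ (i,j) \<noteq> 0"
  proof (rule ccontr)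
    assume "\<not> thesis"
    then have "\<forall>i<?m. \<forall>j<?m. A $$ (i,j) = 0" using that by blast
    then have "A = 0\<^sub>m ?m ?m" using A by (intro eq_matI) auto
    then show False using nz by simp
  qed
  let ?B1 = "swaprows_mat ?m 0 i * A * swaprows_mat ?m 0 j"
  have e1: "mequiv ?m A ?B1" unfolding mequiv_def using unimod_swap[of 0 ?m i] unimod_swap[of 0 ?m j] ij by blast
  have SA: "swaprows_mat ?m 0 i * A \<in> carrier_mat ?m ?m" using A by (intro mult_carrier_mat) auto
  have "?B1 $$ (0,0) = A $$ (i,j)"
    using swap_right[OF SA, of 0 j 0 0] swap_left[OF A, of 0 i 0 j] ij by simp
  then have ex: "\<exists>k. \<exists>B. mequiv ?m A B \<and> B $$ (0,0) \<noteq> 0 \<and> nat \<bar>B $$ (0,0)\<bar> = k"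
    using e1 ij by metis
  define N where "N = (LEAST k. \<exists>B. mequiv ?m A B \<and> B $$ (0,0) \<noteq> 0 \<and> nat \<bar>B $$ (0,0)\<bar> = k)"
  obtain B0 where B0: "mequiv ?m A B0" "B0 $$ (0,0) \<noteq> 0" "nat \<bar>B0 $$ (0,0)\<bar> = N"
    using LeastI_ex[OF ex] unfolding N_def by blast
  have Nle: "N \<le> nat \<bar>B $$ (0,0)\<bar>" if "mequiv ?m A B" "B $$ (0,0) \<noteq> 0" for B
    unfolding N_def using that by (intro Least_le) blast
  have R: "B $$ (0,0) dvd B $$ (i,0)"
    if B: "mequiv ?m A B" "B $$ (0,0) \<noteq> 0" "nat \<bar>B $$ (0,0)\<bar> = N" and i: "i < ?m" for B i
  proof (rule ccontr)
    assume nd: "\<not> B $$ (0,0) dvd B $$ (i,0)"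
    define d where "d = B $$ (0,0)"
    define q where "q = B $$ (i,0) div d"
    define r where "r = B $$ (i,0) mod d"
    have i0: "i \<noteq> 0" using nd by (metis dvd_refl)
    have Bc: "B \<in> carrier_mat ?m ?m" using mequiv_carrier[OF A B(1)] .
    define X where "X = addrow_mat ?m (-q) i 0 * B"
    have Xc: "X \<in> carrier_mat ?m ?m" using Bc unfolding X_def by (intro mult_carrier_mat) auto
    have dm: "B $$ (i,0) = q * d + r" unfolding q_def r_def by simp
    have X: "X $$ (i,0) = r" unfolding X_def using addrow_left[OF Bc, of i 0 i 0 "-q"] i dm d_def by simp
    define Y where "Y = swaprows_mat ?m 0 i * X"
    have Y: "Y $$ (0,0) = r" unfolding Y_def using swap_left[OF Xc, of 0 i 0 0] i X by simp
    have eY: "mequiv ?m A Y" unfolding Y_def X_def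
      using mequiv_left[OF A mequiv_left[OF A B(1) unimod_addrow] unimod_swap] i i0 by auto
    have r0: "r \<noteq> 0" using nd unfolding r_def d_def by (simp add: dvd_eq_mod_eq_0)
    have "\<bar>r\<bar> < \<bar>d\<bar>" unfolding r_def using B(2) d_def by (simp add: abs_mod_less)
    then have "nat \<bar>r\<bar> < N" using B(3) d_def by simp
    moreover have "N \<le> nat \<bar>r\<bar>" using Nle[OF eY] Y r0 by simp
    ultimately show False by simp
  qed
  have Cl: "B $$ (0,0) dvd B $$ (0,j)"
    if B: "mequiv ?m A B" "B $$ (0,0) \<noteq> 0" "nat \<bar>B $$ (0,0)\<bar> = N" and j: "j < ?m" for B j
  proof (rule ccontr)
    assume nd: "\<not> B $$ (0,0) dvd B $$ (0,j)"
    define d where "d = B $$ (0,0)"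
    define q where "q = B $$ (0,j) div d"
    define r where "r = B $$ (0,j) mod d"
    have j0: "j \<noteq> 0" using nd by (metis dvd_refl)
    have Bc: "B \<in> carrier_mat ?m ?m" using mequiv_carrier[OF A B(1)] .
    define X where "X = B * addrow_mat ?m (-q) 0 j"
    have Xc: "X \<in> carrier_mat ?m ?m" using Bc unfolding X_def by (intro mult_carrier_mat) auto
    have dm: "B $$ (0,j) = q * d + r" unfolding q_def r_def by simp
    have X: "X $$ (0,j) = r" unfolding X_def using addrow_right[OF Bc, of 0 j 0 j "-q"] j dm d_def by simp
    define Y where "Y = X * swaprows_mat ?m 0 j"
    have Y: "Y $$ (0,0) = r" unfolding Y_def using swap_right[OF Xc, of 0 j 0 0] j X by simp
    have eY: "mequiv ?m A Y" unfolding Y_def X_def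
      using mequiv_right[OF A mequiv_right[OF A B(1) unimod_addrow] unimod_swap] j j0 by auto
    have r0: "r \<noteq> 0" using nd unfolding r_def d_def by (simp add: dvd_eq_mod_eq_0)
    have "\<bar>r\<bar> < \<bar>d\<bar>" unfolding r_def using B(2) d_def by (simp add: abs_mod_less)
    then have "nat \<bar>r\<bar> < N" using B(3) d_def by simp
    moreover have "N \<le> nat \<bar>r\<bar>" using Nle[OF eY] Y r0 by simp
    ultimately show False by simp
  qed
  have DA: "B $$ (0,0) dvd B $$ (i,j)"
    if B: "mequiv ?m A B" "B $$ (0,0) \<noteq> 0" "nat \<bar>B $$ (0,0)\<bar> = N" and ij: "i < ?m" "j < ?m" for B i j
  proof (cases "i = 0 \<or> j = 0")
    case True
    then show ?thesis using R[OF B] Cl[OF B] ij by blast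
  next
    case False
    define d where "d = B $$ (0,0)"
    define q where "q = B $$ (i,0) div d"
    have Bc: "B \<in> carrier_mat ?m ?m" using mequiv_carrier[OF A B(1)] .
    have dq: "B $$ (i,0) = q * d" unfolding q_def d_def using R[OF B ij(1)] by simp
    define X where "X = addrow_mat ?m (-q) i 0 * B"
    have Xc: "X \<in> carrier_mat ?m ?m" using Bc unfolding X_def by (intro mult_carrier_mat) auto
    have Xi: "X $$ (i,t) = - q * B $$ (0,t) + B $$ (i,t)" if "t < ?m" for t
      unfolding X_def using addrow_left[OF Bc, of i 0 i t "-q"] ij that by simp
    have X0: "X $$ (0,t) = B $$ (0,t)" if "t < ?m" for t
      unfolding X_def using addrow_left[OF Bc, of i 0 0 t "-q"] ij that False by simp
    define Y where "Y = addrow_mat ?m 1 0 i * X"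
    have Y0: "Y $$ (0,t) = X $$ (i,t) + X $$ (0,t)" if "t < ?m" for t
      unfolding Y_def using addrow_left[OF Xc, of 0 i 0 t 1] ij that by simp
    have eY: "mequiv ?m A Y" unfolding Y_def X_def
      using mequiv_left[OF A mequiv_left[OF A B(1) unimod_addrow] unimod_addrow] ij False by auto
    have Y00: "Y $$ (0,0) = d" using Y0[of 0] Xi[of 0] X0[of 0] dq d_def by simp
    have "d dvd Y $$ (0,j)" using Cl[OF eY _ _ ij(2)] Y00 B(2,3) d_def by simp
    moreover have "Y $$ (0,j) = - q * B $$ (0,j) + B $$ (i,j) + B $$ (0,j)"
      using Y0[OF ij(2)] Xi[OF ij(2)] X0[OF ij(2)] by simp
    moreover have "d dvd B $$ (0,j)" using Cl[OF B ij(2)] d_def by simp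
    ultimately have "d dvd Y $$ (0,j) + q * B $$ (0,j) - B $$ (0,j)"
      by (intro dvd_diff dvd_add dvd_mult) auto
    moreover have "Y $$ (0,j) + q * B $$ (0,j) - B $$ (0,j) = B $$ (i,j)"
      using Y0[OF ij(2)] Xi[OF ij(2)] X0[OF ij(2)] by simp
    ultimately show ?thesis unfolding d_def by simp
  qed
  define d where "d = B0 $$ (0,0)"
  have DA': "d dvd B $$ (i,j)" if "mequiv ?m A B" "B $$ (0,0) = d" "i < ?m" "j < ?m" for B i j
    using DA[of B i j] that B0(2,3) unfolding d_def by simp
  have CR: "\<exists>B. mequiv ?m A B \<and> B $$ (0,0) = d \<and> (\<forall>i. 0 < i \<and> i \<le> k \<longrightarrow> B $$ (i,0) = 0)"
    if "k \<le> n" for k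
    using that
  proof (induction k)
    case 0 then show ?case using B0(1) unfolding d_def by auto
  next
    case (Suc k)
    then obtain B where B: "mequiv ?m A B" "B $$ (0,0) = d" "\<forall>i. 0 < i \<and> i \<le> k \<longrightarrow> B $$ (i,0) = 0"
      by auto
    have Bc: "B \<in> carrier_mat ?m ?m" using mequiv_carrier[OF A B(1)] .
    define q where "q = B $$ (Suc k, 0) div d"
    have dq: "B $$ (Suc k,0) = q * d" using DA'[OF B(1,2), of "Suc k" 0] Suc.prems unfolding q_def by simp
    define X where "X = addrow_mat ?m (-q) (Suc k) 0 * B"
    have eX: "mequiv ?m A X" unfolding X_def using mequiv_left[OF A B(1) unimod_addrow] Suc.prems by auto
    have Xe: "X $$ (i,0) = (if i = Suc k then -q * B$$(0,0) + B$$(i,0) else B$$(i,0))" if "i < ?m" for i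
      unfolding X_def using addrow_left[OF Bc, of "Suc k" 0 i 0 "-q"] Suc.prems that by simp
    show ?case
    proof (intro exI[of _ X] conjI allI impI)
      show "mequiv ?m A X" by fact
      show "X $$ (0,0) = d" using Xe[of 0] B(2) by simp
      fix i assume "0 < i \<and> i \<le> Suc k"
      then show "X $$ (i,0) = 0" using Xe[of i] B(2,3) dq Suc.prems by (cases "i = Suc k") auto
    qed
  qed
  have CC: "\<exists>B. mequiv ?m A B \<and> B $$ (0,0) = d \<and> (\<forall>i. 0 < i \<and> i \<le> n \<longrightarrow> B $$ (i,0) = 0)
     \<and> (\<forall>j. 0 < j \<and> j \<le> k \<longrightarrow> B $$ (0,j) = 0)"
    if "k \<le> n" for k
    using that
  proof (induction k)
    case 0 then show ?case using CR[of n] by simp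
  next
    case (Suc k)
    then obtain B where B: "mequiv ?m A B" "B $$ (0,0) = d" "\<forall>i. 0 < i \<and> i \<le> n \<longrightarrow> B $$ (i,0) = 0"
      "\<forall>j. 0 < j \<and> j \<le> k \<longrightarrow> B $$ (0,j) = 0"
      by auto
    have Bc: "B \<in> carrier_mat ?m ?m" using mequiv_carrier[OF A B(1)] .
    define q where "q = B $$ (0, Suc k) div d"
    have dq: "B $$ (0, Suc k) = q * d" using DA'[OF B(1,2), of 0 "Suc k"] Suc.prems unfolding q_def by simp
    define X where "X = B * addrow_mat ?m (-q) 0 (Suc k)"
    have eX: "mequiv ?m A X" unfolding X_def using mequiv_right[OF A B(1) unimod_addrow] Suc.prems by auto
    have Xe: "X $$ (i,j) = (if j = Suc k then B $$ (i,j) + (-q) * B$$(i,0) else B$$(i,j))"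
      if "i < ?m" "j < ?m" for i j
      unfolding X_def using addrow_right[OF Bc, of 0 "Suc k" i j "-q"] Suc.prems that by simp
    show ?case
    proof (intro exI[of _ X] conjI allI impI)
      show "mequiv ?m A X" by fact
      show "X $$ (0,0) = d" using Xe[of 0 0] B(2) by simp
      fix i assume "0 < i \<and> i \<le> n"
      then show "X $$ (i,0) = 0" using Xe[of i 0] B(3) by simp
    next
      fix j assume "0 < j \<and> j \<le> Suc k"
      then show "X $$ (0,j) = 0" using Xe[of 0 j] B(2,4) dq Suc.prems by (cases "j = Suc k") auto
    qed
  qed
  obtain B where B: "mequiv ?m A B" "B $$ (0,0) = d" "\<forall>i. 0 < i \<and> i \<le> n \<longrightarrow> B $$ (i,0) = 0"
      "\<forall>j. 0 < j \<and> j \<le> n \<longrightarrow> B $$ (0,j) = 0"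
    using CC[of n] by auto
  have "\<forall>i<Suc n. \<forall>j<Suc n. B $$ (0,0) dvd B $$ (i,j)" using DA'[OF B(1,2)] B(2) by simp
  moreover have "\<forall>i. 0 < i \<and> i < Suc n \<longrightarrow> B $$ (i,0) = 0 \<and> B $$ (0,i) = 0" using B(3,4) by simp
  moreover have "B $$ (0,0) \<noteq> 0" using B(2) B0(2) d_def by simp
  ultimately show ?thesis using B(1) by blast
qed

lemma mat_mult_entry: "(A :: int mat) \<in> carrier_mat nr k \<Longrightarrow> B \<in> carrier_mat k nc \<Longrightarrow> i < nr \<Longrightarrow> j < nc \<Longrightarrow>
  (A * B) $$ (i,j) = (\<Sum>t<k. A $$ (i,t) * B $$ (t,j))"
  by (auto simp: scalar_prod_def lessThan_atLeast0 intro!: sum.cong)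

lemma dvd_mat_left: "(A :: int mat) \<in> carrier_mat nr k \<Longrightarrow> B \<in> carrier_mat k nc \<Longrightarrow>
  \<forall>t<k. \<forall>j<nc. d dvd B $$ (t,j) \<Longrightarrow> \<forall>i<nr. \<forall>j<nc. d dvd (A * B) $$ (i,j)"
  by (intro allI impI, subst mat_mult_entry[of A nr k B nc]) (auto intro!: dvd_sum dvd_mult)

lemma dvd_mat_right: "(A :: int mat) \<in> carrier_mat nr k \<Longrightarrow> B \<in> carrier_mat k nc \<Longrightarrow>
  \<forall>i<nr. \<forall>t<k. d dvd A $$ (i,t) \<Longrightarrow> \<forall>i<nr. \<forall>j<nc. d dvd (A * B) $$ (i,j)"
  by (intro allI impI, subst mat_mult_entry[of A nr k B nc]) (auto intro!: dvd_sum dvd_mult2)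

definition ext_blk :: "nat \<Rightarrow> int \<Rightarrow> int mat \<Rightarrow> int mat" where
  "ext_blk n d M = mat (Suc n) (Suc n) (\<lambda>(i,j). if i = 0 \<and> j = 0 then d else if i = 0 \<or> j = 0 then 0 else M $$ (i-1, j-1))"

lemma ext_blk_carrier[simp]: "ext_blk n d M \<in> carrier_mat (Suc n) (Suc n)"
  unfolding ext_blk_def by simp

lemma ext_blk_index: "i < Suc n \<Longrightarrow> j < Suc n \<Longrightarrow>
  ext_blk n d M $$ (i,j) = (if i = 0 \<and> j = 0 then d else if i = 0 \<or> j = 0 then 0 else M $$ (i-1, j-1))"
  unfolding ext_blk_def by simp

lemma ext_blk_mult: assumes M: "M \<in> carrier_mat n n" and N: "N \<in> carrier_mat n n"
  shows "ext_blk n a M * ext_blk n b N = ext_blk n (a*b) (M*N)"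
proof (rule eq_matI)
  fix i j assume "i < dim_row (ext_blk n (a*b) (M*N))" "j < dim_col (ext_blk n (a*b) (M*N))"
  then have ij: "i < Suc n" "j < Suc n" by (auto simp: ext_blk_def)
  have "(ext_blk n a M * ext_blk n b N) $$ (i,j) = (\<Sum>t<Suc n. ext_blk n a M $$ (i,t) * ext_blk n b N $$ (t,j))"
    using ij by (intro mat_mult_entry) auto
  also have "\<dots> = ext_blk n a M $$ (i,0) * ext_blk n b N $$ (0,j) + (\<Sum>t<n. ext_blk n a M $$ (i,Suc t) * ext_blk n b N $$ (Suc t,j))"
    by (subst sum.lessThan_Suc_shift) simp
  also have "\<dots> = ext_blk n (a*b) (M*N) $$ (i,j)"
  proof (cases "i = 0 \<or> j = 0")
    case True
    then show ?thesis using ij by (auto simp: ext_blk_index)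
  next
    case False
    then have "(M*N) $$ (i-1,j-1) = (\<Sum>t<n. M $$ (i-1,t) * N $$ (t,j-1))"
      using ij M N by (intro mat_mult_entry) auto
    then show ?thesis using ij False by (auto simp: ext_blk_index)
  qed
  finally show "(ext_blk n a M * ext_blk n b N) $$ (i,j) = ext_blk n (a*b) (M*N) $$ (i,j)" .
qed (auto simp: ext_blk_def)

lemma ext_blk_one: "ext_blk n 1 (1\<^sub>m n) = 1\<^sub>m (Suc n)"
  by (rule eq_matI) (auto simp: ext_blk_def)

lemma unimod_ext: assumes "unimod n P" "s * s = 1" shows "unimod (Suc n) (ext_blk n s P)"
proof -
  obtain Q where Q: "P \<in> carrier_mat n n" "Q \<in> carrier_mat n n" "P * Q = 1\<^sub>m n" "Q * P = 1\<^sub>m n"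
    using assms(1) unfolding unimod_def by blast
  have "ext_blk n s P * ext_blk n s Q = 1\<^sub>m (Suc n)" "ext_blk n s Q * ext_blk n s P = 1\<^sub>m (Suc n)"
    using ext_blk_mult[OF Q(1,2)] ext_blk_mult[OF Q(2,1)] Q(3,4) assms(2) ext_blk_one by auto
  then show ?thesis unfolding unimod_def by (intro conjI bexI[of _ "ext_blk n s Q"]) auto
qed

theorem snf_exists: "A \<in> carrier_mat n n \<Longrightarrow> \<exists>P Q. unimod n P \<and> unimod n Q \<and>
   (\<forall>i<n. \<forall>j<n. i \<noteq> j \<longrightarrow> (P*A*Q) $$ (i,j) = 0) \<and> (\<forall>i<n. (P*A*Q) $$ (i,i) \<ge> 0) \<and>
   (\<forall>i. Suc i < n \<longrightarrow> (P*A*Q) $$ (i,i) dvd (P*A*Q) $$ (Suc i, Suc i))"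
proof (induction n arbitrary: A)
  case 0
  then show ?case using unimod_one[of 0] by (intro exI[of _ "1\<^sub>m 0"] conjI) auto
next
  case (Suc n)
  show ?case
  proof (cases "A = 0\<^sub>m (Suc n) (Suc n)")
    case True
    have "1\<^sub>m (Suc n) * A * 1\<^sub>m (Suc n) = A" using Suc.prems by simp
    then show ?thesis using unimod_one[of "Suc n"] True
      by (intro exI[of _ "1\<^sub>m (Suc n)"] conjI) auto
  next
    case False
    obtain B where B: "mequiv (Suc n) A B" "B $$ (0,0) \<noteq> 0" "\<forall>i<Suc n. \<forall>j<Suc n. B $$ (0,0) dvd B $$ (i,j)"
      "\<forall>i. 0 < i \<and> i < Suc n \<longrightarrow> B $$ (i,0) = 0 \<and> B $$ (0,i) = 0"
      using KL[OF Suc.prems False] by blast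
    obtain P0 Q0 where PQ0: "unimod (Suc n) P0" "unimod (Suc n) Q0" "B = P0 * A * Q0"
      using B(1) unfolding mequiv_def by blast
    have Bc: "B \<in> carrier_mat (Suc n) (Suc n)" using mequiv_carrier[OF Suc.prems B(1)] .
    define d where "d = B $$ (0,0)"
    define B' where "B' = mat n n (\<lambda>(i,j). B $$ (Suc i, Suc j))"
    have B'c: "B' \<in> carrier_mat n n" unfolding B'_def by simp
    have Bext: "B = ext_blk n d B'"
    proof (rule eq_matI)
      fix i j assume "i < dim_row (ext_blk n d B')" "j < dim_col (ext_blk n d B')"
      then have ij: "i < Suc n" "j < Suc n" by (auto simp: ext_blk_def)
      then show "B $$ (i,j) = ext_blk n d B' $$ (i,j)"
        using B(4) by (cases i; cases j) (auto simp: ext_blk_index B'_def d_def)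
    qed (use Bc in \<open>auto simp: ext_blk_def\<close>)
    have dB': "\<forall>i<n. \<forall>j<n. d dvd B' $$ (i,j)" using B(3) unfolding B'_def d_def by auto
    obtain P' Q' where IH: "unimod n P'" "unimod n Q'"
      "\<forall>i<n. \<forall>j<n. i \<noteq> j \<longrightarrow> (P'*B'*Q') $$ (i,j) = 0" "\<forall>i<n. (P'*B'*Q') $$ (i,i) \<ge> 0"
      "\<forall>i. Suc i < n \<longrightarrow> (P'*B'*Q') $$ (i,i) dvd (P'*B'*Q') $$ (Suc i, Suc i)"
      using Suc.IH[OF B'c] by blast
    define D' where "D' = P' * B' * Q'"
    have P'c: "P' \<in> carrier_mat n n" and Q'c: "Q' \<in> carrier_mat n n" using IH unimod_carrier by auto
    have "\<forall>i<n. \<forall>j<n. d dvd (P' * B') $$ (i,j)" using dvd_mat_left[OF P'c B'c dB'] .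
    then have dD': "\<forall>i<n. \<forall>j<n. d dvd D' $$ (i,j)" unfolding D'_def
      using dvd_mat_right[OF _ Q'c, of "P' * B'" n d] P'c B'c by auto
    define s where "s = sgn d"
    have ss: "s * s = 1" using B(2) unfolding s_def d_def by (simp add: sgn_if)
    have sd: "s * d = \<bar>d\<bar>" unfolding s_def by (simp add: sgn_if)
    define P where "P = ext_blk n s P' * P0"
    define Q where "Q = Q0 * ext_blk n 1 Q'"
    have P0c: "P0 \<in> carrier_mat (Suc n) (Suc n)" and Q0c: "Q0 \<in> carrier_mat (Suc n) (Suc n)"
      using PQ0 unimod_carrier by auto
    have "P * A * Q = ext_blk n s P' * (P0 * A * Q0) * ext_blk n 1 Q'"
      unfolding P_def Q_def using P0c Q0c Suc.prems
      by (simp add: assoc_mult_mat[of _ "Suc n" "Suc n" _ "Suc n" _ "Suc n"])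
    also have "\<dots> = ext_blk n s P' * ext_blk n d B' * ext_blk n 1 Q'" using PQ0(3) Bext by simp
    also have "\<dots> = ext_blk n (s * d * 1) (P' * B' * Q')"
      using ext_blk_mult[OF P'c B'c] ext_blk_mult[OF _ Q'c, of "P' * B'"] P'c B'c by simp
    finally have PAQ: "P * A * Q = ext_blk n \<bar>d\<bar> D'" unfolding D'_def using sd by simp
    have uP: "unimod (Suc n) P" unfolding P_def using unimod_mult unimod_ext[OF IH(1) ss] PQ0(1) by blast
    have uQ: "unimod (Suc n) Q" unfolding Q_def using unimod_mult unimod_ext[OF IH(2)] PQ0(2) by simp
    have f1: "\<forall>i<Suc n. \<forall>j<Suc n. i \<noteq> j \<longrightarrow> (P * A * Q) $$ (i,j) = 0"
      unfolding PAQ using IH(3) unfolding D'_def[symmetric] by (auto simp: ext_blk_index)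
    have f2: "\<forall>i<Suc n. (P * A * Q) $$ (i,i) \<ge> 0"
      unfolding PAQ using IH(4) unfolding D'_def[symmetric] by (auto simp: ext_blk_index)
    have f3: "(P * A * Q) $$ (i,i) dvd (P * A * Q) $$ (Suc i, Suc i)" if i: "Suc i < Suc n" for i
    proof (cases i)
      case 0
      then show ?thesis unfolding PAQ using i dD' by (auto simp: ext_blk_index)
    next
      case (Suc i')
      then show ?thesis unfolding PAQ using i IH(5) unfolding D'_def[symmetric]
        by (auto simp: ext_blk_index)
    qed
    show ?thesis using uP uQ f1 f2 f3 by blast
  qed
qed

lemma diag_det: assumes D: "(D :: int mat) \<in> carrier_mat n n" and off: "\<forall>i<n. \<forall>j<n. i \<noteq> j \<longrightarrow> D $$ (i,j) = 0"
  shows "det D = (\<Prod>i<n. D $$ (i,i))"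
proof -
  have "upper_triangular D" using D off unfolding upper_triangular_def by auto
  then have "det D = prod_list (diag_mat D)" using det_upper_triangular D by blast
  also have "\<dots> = (\<Prod>i<n. D $$ (i,i))" using D by (simp add: prod_list_diag_prod lessThan_atLeast0)
  finally show ?thesis .
qed

lemma invertible_det_nz: assumes "invertible_mat (P :: int mat)" "P \<in> carrier_mat n n" shows "det P \<noteq> 0"
proof -
  obtain B where B: "P * B = 1\<^sub>m n" "B * P = 1\<^sub>m (dim_row B)"
    using assms unfolding invertible_mat_def inverts_mat_def by auto
  have "dim_col B = n" using B(1) by (metis index_mult_mat(3) index_one_mat(3))
  moreover have "dim_row B = n" using B(2) assms(2) by (metis carrier_matD(2) index_mult_mat(3) index_one_mat(3))
  ultimately have Bc: "B \<in> carrier_mat n n" by auto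
  have "det P * det B = 1" using det_mult[OF assms(2) Bc] B(1) by simp
  then show ?thesis by auto
qed

lemma chain_dvd: fixes f :: "nat \<Rightarrow> int" and i j r :: nat
  shows "(\<forall>i. i + 1 < r \<longrightarrow> f i dvd f (i + 1)) \<Longrightarrow> i \<le> j \<Longrightarrow> j < r \<Longrightarrow> f i dvd f j"
proof (induction j)
  case 0 then show ?case by simp
next
  case (Suc j)
  show ?case
  proof (cases "i = Suc j")
    case True then show ?thesis by simp
  next
    case False
    then have "f i dvd f j" using Suc by simp
    moreover have "f j dvd f (Suc j)" using Suc.prems(1) Suc.prems(3) by auto
    ultimately show ?thesis by (rule dvd_trans)
  qed
qed

lemma snf_last_exists: assumes A: "A \<in> carrier_mat n n" and n: "0 < n" and dA: "det A \<noteq> 0"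
  shows "\<exists>e. is_SNF_last A e"
proof -
  obtain P Q where PQ: "unimod n P" "unimod n Q"
    "\<forall>i<n. \<forall>j<n. i \<noteq> j \<longrightarrow> (P*A*Q) $$ (i,j) = 0" "\<forall>i<n. (P*A*Q) $$ (i,i) \<ge> 0"
    "\<forall>i. Suc i < n \<longrightarrow> (P*A*Q) $$ (i,i) dvd (P*A*Q) $$ (Suc i, Suc i)"
    using snf_exists[OF A] by blast
  define D where "D = P * A * Q"
  have Pc: "P \<in> carrier_mat n n" and Qc: "Q \<in> carrier_mat n n" using PQ unimod_carrier by auto
  have Dc: "D \<in> carrier_mat n n" unfolding D_def using Pc Qc A by auto
  have "det D = det P * det A * det Q" unfolding D_def using Pc Qc A
    by (metis det_mult mult_carrier_mat)
  then have "det D \<noteq> 0" using unimod_det[OF PQ(1)] unimod_det[OF PQ(2)] dA by simp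
  moreover have "det D = (\<Prod>i<n. D $$ (i,i))" using diag_det[OF Dc] PQ(3) unfolding D_def by blast
  ultimately have nz: "\<forall>i<n. D $$ (i,i) \<noteq> 0" by auto
  have pos: "\<forall>i<n. D $$ (i,i) > 0" using nz PQ(4) unfolding D_def by force
  show ?thesis unfolding is_SNF_last_def Let_def
    using A n Pc Qc unimod_invertible[OF PQ(1)] unimod_invertible[OF PQ(2)] PQ(3,5) pos
    unfolding D_def
    by (intro exI[of _ "D $$ (n-1,n-1)"] exI[of _ P] exI[of _ Q] exI[of _ n]) (auto simp: D_def)
qed

lemma snf_last_dvd: assumes S: "is_SNF_last A e" and A: "A \<in> carrier_mat n n" and dA: "det A \<noteq> 0"
  and p: "prime (p :: int)" and pd: "p dvd det A"
  shows "p dvd e"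
proof -
  obtain P Q r where PQ: "P \<in> carrier_mat n n" "Q \<in> carrier_mat n n" "invertible_mat P" "invertible_mat Q"
    "1 \<le> r" "r \<le> n" "\<forall>i<n. \<forall>j<n. i \<noteq> j \<longrightarrow> (P*A*Q) $$ (i,j) = 0"
    "\<forall>i<r. (P*A*Q) $$ (i,i) > 0" "\<forall>i. r \<le> i \<and> i < n \<longrightarrow> (P*A*Q) $$ (i,i) = 0"
    "\<forall>i. i + 1 < r \<longrightarrow> (P*A*Q) $$ (i,i) dvd (P*A*Q) $$ (i + 1,i + 1)"
    "e = (P*A*Q) $$ (r - 1, r - 1)"
    using S A unfolding is_SNF_last_def Let_def by auto
  define D where "D = P * A * Q"
  have Dc: "D \<in> carrier_mat n n" unfolding D_def using PQ A by auto
  have dD: "det D = det P * det A * det Q" unfolding D_def using PQ A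
    by (metis det_mult mult_carrier_mat)
  then have dnz: "det D \<noteq> 0" using invertible_det_nz[OF PQ(3,1)] invertible_det_nz[OF PQ(4,2)] dA by simp
  have prodD: "det D = (\<Prod>i<n. D $$ (i,i))" using diag_det[OF Dc] PQ(7) unfolding D_def by blast
  have rn: "r = n"
  proof (rule ccontr)
    assume "r \<noteq> n"
    then have "D $$ (r,r) = 0" using PQ(6,9) unfolding D_def by auto
    then have "(\<Prod>i<n. D $$ (i,i)) = 0" using PQ(6) \<open>r \<noteq> n\<close>
      by (intro prod_zero) (auto intro!: bexI[of _ r])
    then show False using dnz prodD by simp
  qed
  have "p dvd det D" using dD pd by simp
  then obtain i where i: "i < n" "p dvd D $$ (i,i)" using prodD p by (auto simp: prime_dvd_prod_iff)
  have "D $$ (i,i) dvd D $$ (n-1,n-1)"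
    using chain_dvd[of r "\<lambda>i. D $$ (i,i)" i "n-1"] PQ(10) rn i unfolding D_def by auto
  then show ?thesis using i PQ(11) rn unfolding D_def by (metis dvd_trans)
qed

lemma lookup_const_mult: "Poly_Mapping.lookup (Poly_Mapping.single 0 s * (p::zpoly)) k = s * Poly_Mapping.lookup p k"
  by (simp add: mult_map_scale_conv_mult[symmetric] map.rep_eq when_def)

lemma single_sum: "Poly_Mapping.single k (\<Sum>x\<in>A. f x) = (\<Sum>x\<in>A. Poly_Mapping.single k (f x))"
  by (induction A rule: infinite_finite_induct) (auto simp: single_add)

lemma single_one_eq_iff: "(Poly_Mapping.single (k::nat) (1::nat) = Poly_Mapping.single k' 1) \<longleftrightarrow> k = k'"
  by (metis lookup_single_eq lookup_single_not_eq one_neq_zero)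

lemma single_suc0_eq_iff: "(Poly_Mapping.single (k::nat) (Suc 0) = Poly_Mapping.single k' (Suc 0)) \<longleftrightarrow> k = k'"
  using single_one_eq_iff by simp

lemma lin_form_expand: "lin_form C i = (\<Sum>k<dim_row C. Poly_Mapping.single (Poly_Mapping.single k 1) (C $$ (k,i)))"
  unfolding lin_form_def Var_def by (simp add: mult_single)

lemma lookup_lin_form: "k < dim_row C \<Longrightarrow> Poly_Mapping.lookup (lin_form C i) (Poly_Mapping.single k 1) = C $$ (k,i)"
  unfolding lin_form_expand lookup_sum lookup_single
  by (simp add: when_def single_suc0_eq_iff)

lemma keys_lin_form: "Poly_Mapping.keys (lin_form C i) \<subseteq> {Poly_Mapping.single k 1 | k. k < dim_row C}"
  unfolding lin_form_expand using keys_sum by (fastforce split: if_splits)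

lemma monos_add: "a \<in> monos_l l \<Longrightarrow> b \<in> monos_l l \<Longrightarrow> a + b \<in> monos_l l"
  unfolding monos_l_def using keys_add[of a b] by auto

lemma zpolys_add: "f \<in> zpolys l \<Longrightarrow> g \<in> zpolys l \<Longrightarrow> f + g \<in> zpolys l"
  unfolding zpolys_def using keys_add[of f g] by auto

lemma zpolys_mult: assumes "f \<in> zpolys l" "g \<in> zpolys l" shows "f * g \<in> zpolys l"
  unfolding zpolys_def
proof (intro CollectI subsetI)
  fix x assume "x \<in> Poly_Mapping.keys (f * g)"
  then obtain a b where ab: "x = a + b" "a \<in> Poly_Mapping.keys f" "b \<in> Poly_Mapping.keys g"
    using keys_mult[of f g] by blast
  then show "x \<in> monos_l l" using assms monos_add unfolding zpolys_def by blast
qed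

lemma zpolys_single: "m \<in> monos_l l \<Longrightarrow> Poly_Mapping.single m c \<in> zpolys l"
  unfolding zpolys_def by auto

lemma zpolys_zero: "0 \<in> zpolys l"
  unfolding zpolys_def by auto

lemma zero_monos: "0 \<in> monos_l l"
  unfolding monos_l_def by auto

lemma zpolys_sum: "(\<And>x. x \<in> A \<Longrightarrow> f x \<in> zpolys l) \<Longrightarrow> (\<Sum>x\<in>A. f x) \<in> zpolys l"
  by (induction A rule: infinite_finite_induct) (auto simp: zpolys_zero zpolys_add)

lemma lin_form_zpolys: "dim_row C = l \<Longrightarrow> lin_form C i \<in> zpolys l"
  unfolding lin_form_expand
  by (intro zpolys_sum zpolys_single) (auto simp: monos_l_def)

lemma ideal_gen_add: "f \<in> ideal_gen l S \<Longrightarrow> g \<in> ideal_gen l S \<Longrightarrow> f + g \<in> ideal_gen l S"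
proof -
  assume "f \<in> ideal_gen l S" "g \<in> ideal_gen l S"
  then obtain h1 h2 where h: "f = (\<Sum>s\<in>S. h1 s * s)" "\<forall>s\<in>S. h1 s \<in> zpolys l"
    "g = (\<Sum>s\<in>S. h2 s * s)" "\<forall>s\<in>S. h2 s \<in> zpolys l"
    unfolding ideal_gen_def by blast
  have "f + g = (\<Sum>s\<in>S. (h1 s + h2 s) * s)" unfolding h by (simp add: sum.distrib distrib_right)
  moreover have "\<forall>s\<in>S. h1 s + h2 s \<in> zpolys l" using h zpolys_add by blast
  ultimately show ?thesis unfolding ideal_gen_def by (intro CollectI exI[of _ "\<lambda>s. h1 s + h2 s"] conjI) auto
qed

lemma ideal_gen_mult: "f \<in> ideal_gen l S \<Longrightarrow> c \<in> zpolys l \<Longrightarrow> c * f \<in> ideal_gen l S"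
proof -
  assume "f \<in> ideal_gen l S" "c \<in> zpolys l"
  then obtain h1 where h: "f = (\<Sum>s\<in>S. h1 s * s)" "\<forall>s\<in>S. h1 s \<in> zpolys l"
    unfolding ideal_gen_def by blast
  have "c * f = (\<Sum>s\<in>S. (c * h1 s) * s)" unfolding h by (simp add: sum_distrib_left mult.assoc)
  moreover have "\<forall>s\<in>S. c * h1 s \<in> zpolys l" using h zpolys_mult \<open>c \<in> zpolys l\<close> by blast
  ultimately show ?thesis unfolding ideal_gen_def by (intro CollectI exI[of _ "\<lambda>s. c * h1 s"] conjI) auto
qed

lemma ideal_gen_zpolys: "S \<subseteq> zpolys l \<Longrightarrow> ideal_gen l S \<subseteq> zpolys l"
  unfolding ideal_gen_def by (auto intro!: zpolys_sum zpolys_mult)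

lemma nat_pm_add_eq_0: "(a::nat \<Rightarrow>\<^sub>0 nat) + b = 0 \<Longrightarrow> b = 0"
  by (metis add_is_0 lookup_add lookup_zero poly_mapping_eqI)

lemma zero_notin_keys_mult: assumes "0 \<notin> Poly_Mapping.keys (g::zpoly)" shows "0 \<notin> Poly_Mapping.keys (f * g)"
proof
  assume "0 \<in> Poly_Mapping.keys (f * g)"
  then obtain a b where ab: "0 = a + b" "b \<in> Poly_Mapping.keys g"
    using keys_mult[of f g] by blast
  then have "b = 0" using nat_pm_add_eq_0 by metis
  then show False using ab assms by simp
qed

lemma zero_notin_keys_sum: "(\<And>x. x \<in> A \<Longrightarrow> 0 \<notin> Poly_Mapping.keys (f x :: zpoly)) \<Longrightarrow> 0 \<notin> Poly_Mapping.keys (\<Sum>x\<in>A. f x)"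
  using keys_sum[of f A] by blast

lemma ideal_gen_no_const: assumes "\<And>s. s \<in> S \<Longrightarrow> 0 \<notin> Poly_Mapping.keys s" "f \<in> ideal_gen l S"
  shows "0 \<notin> Poly_Mapping.keys f"
proof -
  obtain h where "f = (\<Sum>s\<in>S. h s * s)" using assms(2) unfolding ideal_gen_def by blast
  then show ?thesis using assms(1) zero_notin_keys_mult zero_notin_keys_sum[of S "\<lambda>s. h s * s"] by metis
qed

lemma lin_form_no_const: "0 \<notin> Poly_Mapping.keys (lin_form C i)"
proof
  assume "0 \<in> Poly_Mapping.keys (lin_form C i)"
  then obtain k where "(0 :: nat \<Rightarrow>\<^sub>0 nat) = Poly_Mapping.single k 1" using keys_lin_form by blast
  then show False by (metis lookup_single_eq lookup_zero one_neq_zero)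
qed

lemma mono_split: assumes "m \<in> monos_l l" "m \<noteq> 0"
  shows "\<exists>k<l. \<exists>m'\<in>monos_l l. m = m' + Poly_Mapping.single k 1"
proof -
  obtain k where k: "k \<in> Poly_Mapping.keys m" using assms(2) by (metis all_not_in_conv keys_eq_empty)
  have kl: "k < l" using k assms(1) unfolding monos_l_def by auto
  define m' where "m' = m - Poly_Mapping.single k 1"
  have "m = m' + Poly_Mapping.single k 1"
  proof (rule poly_mapping_eqI)
    fix x
    show "Poly_Mapping.lookup m x = Poly_Mapping.lookup (m' + Poly_Mapping.single k 1) x"
      using k unfolding m'_def
      by (cases "x = k") (auto simp: lookup_add lookup_minus lookup_single in_keys_iff)
  qed
  moreover have "m' \<in> monos_l l" using assms(1) keys_diff[of m "Poly_Mapping.single k 1"] kl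
    unfolding monos_l_def m'_def by auto
  ultimately show ?thesis using kl by blast
qed

lemma to_refl: "term_order l ord \<Longrightarrow> m \<in> monos_l l \<Longrightarrow> ord m m"
  unfolding term_order_def by (elim conjE) blast
lemma to_trans: "term_order l ord \<Longrightarrow> m1 \<in> monos_l l \<Longrightarrow> m2 \<in> monos_l l \<Longrightarrow> m3 \<in> monos_l l \<Longrightarrow>
  ord m1 m2 \<Longrightarrow> ord m2 m3 \<Longrightarrow> ord m1 m3"
  unfolding term_order_def by (elim conjE) blast
lemma to_antisym: "term_order l ord \<Longrightarrow> m1 \<in> monos_l l \<Longrightarrow> m2 \<in> monos_l l \<Longrightarrow>
  ord m1 m2 \<Longrightarrow> ord m2 m1 \<Longrightarrow> m1 = m2"
  unfolding term_order_def by (elim conjE) blast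
lemma to_total: "term_order l ord \<Longrightarrow> m1 \<in> monos_l l \<Longrightarrow> m2 \<in> monos_l l \<Longrightarrow>
  ord m1 m2 \<or> ord m2 m1"
  unfolding term_order_def by (elim conjE) blast

lemma max_exists:
  assumes to: "term_order l ord" and fin: "finite X" and ne: "X \<noteq> {}" and sub: "X \<subseteq> monos_l l"
  shows "\<exists>m\<in>X. \<forall>m'\<in>X. ord m' m"
  using fin ne sub
proof (induction X rule: finite_ne_induct)
  case (singleton x)
  then show ?case using to_refl[OF to] by auto
next
  case (insert x F)
  then obtain m where m: "m \<in> F" "\<forall>m'\<in>F. ord m' m" by auto
  have xm: "x \<in> monos_l l" "m \<in> monos_l l" using insert m by auto
  show ?case
  proof (cases "ord x m")
    case True
    then show ?thesis using m by auto
  next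
    case False
    then have mx: "ord m x" using to_total[OF to xm] by blast
    have "\<forall>m'\<in>F. ord m' x"
    proof
      fix m' assume "m' \<in> F"
      then show "ord m' x" using to_trans[OF to _ xm(2) xm(1) _ mx, of m'] m insert.prems by auto
    qed
    moreover have "ord x x" using to_refl[OF to xm(1)] .
    ultimately show ?thesis by auto
  qed
qed

lemma lead_mono_eq:
  assumes to: "term_order l ord" and f: "f \<in> zpolys l" and m: "m \<in> Poly_Mapping.keys f"
    and mx: "\<forall>m'\<in>Poly_Mapping.keys f. ord m' m"
  shows "lead_mono ord f = m"
  unfolding lead_mono_def
proof (rule the_equality)
  show "m \<in> Poly_Mapping.keys f \<and> (\<forall>m'\<in>Poly_Mapping.keys f. ord m' m)" using m mx by blast
next
  fix m2 assume m2: "m2 \<in> Poly_Mapping.keys f \<and> (\<forall>m'\<in>Poly_Mapping.keys f. ord m' m2)"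
  have "m2 \<in> monos_l l" "m \<in> monos_l l" using m2 m f unfolding zpolys_def by auto
  moreover have "ord m2 m" "ord m m2" using m2 m mx by auto
  ultimately show "m2 = m" using to_antisym[OF to] by blast
qed

lemma lead_mono_props:
  assumes to: "term_order l ord" and f: "f \<in> zpolys l" and nz: "f \<noteq> 0"
  shows "lead_mono ord f \<in> Poly_Mapping.keys f" "\<forall>m'\<in>Poly_Mapping.keys f. ord m' (lead_mono ord f)"
proof -
  have "Poly_Mapping.keys f \<noteq> {}" using nz by simp
  moreover have "Poly_Mapping.keys f \<subseteq> monos_l l" using f unfolding zpolys_def by auto
  ultimately obtain m where m: "m \<in> Poly_Mapping.keys f" "\<forall>m'\<in>Poly_Mapping.keys f. ord m' m"
    using max_exists[OF to finite_keys] by blast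
  have "lead_mono ord f = m" using lead_mono_eq[OF to f m] .
  then show "lead_mono ord f \<in> Poly_Mapping.keys f" "\<forall>m'\<in>Poly_Mapping.keys f. ord m' (lead_mono ord f)"
    using m by auto
qed

lemma GB_core:
  fixes g :: zpoly and d :: int
  assumes to: "term_order l ord"
    and Sz: "S \<subseteq> zpolys l" and Snc: "\<And>s. s \<in> S \<Longrightarrow> 0 \<notin> Poly_Mapping.keys s"
    and dvar: "\<forall>k<l. Poly_Mapping.single 0 d * Var k \<in> ideal_gen l S"
    and GB: "is_min_strong_GB l ord (ideal_gen l S) G" and gG: "g \<in> G"
    and pd: "int p dvd lead_coeff_z ord g"
  shows "int p dvd d"
proof (rule ccontr)
  assume npd: "\<not> int p dvd d"
  let ?I = "ideal_gen l S"
  have Iz: "?I \<subseteq> zpolys l" using ideal_gen_zpolys[OF Sz] .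
  have gI: "g \<in> ?I" and gnz: "g \<noteq> 0" using GB gG unfolding is_min_strong_GB_def by auto
  have gz: "g \<in> zpolys l" using gI Iz by auto
  define m where "m = lead_mono ord g"
  define c where "c = lead_coeff_z ord g"
  have c_def': "c = Poly_Mapping.lookup g m" unfolding c_def m_def lead_coeff_z_def ..
  have mk: "m \<in> Poly_Mapping.keys g" and mmax: "\<forall>x\<in>Poly_Mapping.keys g. ord x m"
    using lead_mono_props[OF to gz gnz] unfolding m_def by auto
  have c0: "c \<noteq> 0" using mk c_def' by (simp add: in_keys_iff)
  have m0: "m \<noteq> 0" using mk ideal_gen_no_const[OF Snc gI] by auto
  have mmon: "m \<in> monos_l l" using mk gz unfolding zpolys_def by auto
  obtain k m' where km: "k < l" "m' \<in> monos_l l" "m = m' + Poly_Mapping.single k 1"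
    using mono_split[OF mmon m0] by blast
  obtain u v where uv: "u * c + v * d = gcd c d" using bezout_int by blast
  define f2 where "f2 = Poly_Mapping.single 0 u * g + Poly_Mapping.single m' v * (Poly_Mapping.single 0 d * Var k)"
  have dk: "Poly_Mapping.single 0 d * Var k \<in> ?I" using dvar km(1) by auto
  have f2I: "f2 \<in> ?I" unfolding f2_def
    using ideal_gen_add[OF ideal_gen_mult[OF gI zpolys_single[OF zero_monos]] ideal_gen_mult[OF dk zpolys_single[OF km(2)]]] .
  have "Poly_Mapping.single m' v * (Poly_Mapping.single 0 d * Var k) = Poly_Mapping.single m (v * d)"
    unfolding Var_def km(3) by (simp add: mult_single)
  then have f2eq: "f2 = Poly_Mapping.single 0 u * g + Poly_Mapping.single m (v * d)" unfolding f2_def by simp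
  have lk: "Poly_Mapping.lookup f2 x = u * Poly_Mapping.lookup g x + (if x = m then v * d else 0)" for x
    unfolding f2eq lookup_add lookup_const_mult lookup_single by (simp add: when_def)
  have f2m: "Poly_Mapping.lookup f2 m = gcd c d" using lk[of m] c_def' uv by simp
  have gcd0: "gcd c d \<noteq> 0" using c0 by simp
  have mk2: "m \<in> Poly_Mapping.keys f2" using f2m gcd0 by (simp add: in_keys_iff)
  have keys2: "Poly_Mapping.keys f2 \<subseteq> Poly_Mapping.keys g \<union> {m}"
    using lk by (auto simp: in_keys_iff split: if_splits)
  have mx2: "\<forall>x\<in>Poly_Mapping.keys f2. ord x m"
    using keys2 mmax to_refl[OF to mmon] by blast
  have f2z: "f2 \<in> zpolys l" using f2I Iz by auto
  have LM2: "lead_mono ord f2 = m" using lead_mono_eq[OF to f2z mk2 mx2] .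
  have LC2: "lead_coeff_z ord f2 = gcd c d" unfolding lead_coeff_z_def LM2 f2m ..
  have f2nz: "f2 \<noteq> 0" using mk2 by auto
  obtain g' where g': "g' \<in> G" "lm_dvd ord g' f2" using GB f2I f2nz unfolding is_min_strong_GB_def by blast
  have "lm_dvd ord g' g"
    using g'(2) unfolding lm_dvd_def LM2 LC2 m_def[symmetric] c_def[symmetric]
    by (meson dvd_trans gcd_dvd1)
  then have "g' = g" using GB g'(1) gG unfolding is_min_strong_GB_def by blast
  then have "c dvd gcd c d" using g'(2) unfolding lm_dvd_def LC2 c_def by simp
  then have "c dvd d" by (meson dvd_trans gcd_dvd2)
  then show False using pd npd unfolding c_def by (meson dvd_trans)
qed

lemma comb_in_ideal:
  assumes fin: "finite J" and cJ: "card J = l" and inj: "inj_on (lin_form C) J"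
    and a: "\<forall>t<l. a t \<in> zpolys l"
  shows "(\<Sum>t<l. a t * lin_form C (sorted_list_of_set J ! t)) \<in> ideal_gen l (lin_form C ` J)"
proof -
  define sj where "sj = sorted_list_of_set J"
  have len: "length sj = l" and dist: "distinct sj" and setsj: "set sj = J"
    using fin cJ unfolding sj_def by auto
  define \<phi> where "\<phi> t = lin_form C (sj ! t)" for t
  have nthJ: "sj ! t \<in> J" if "t < l" for t using that len setsj nth_mem by blast
  have injphi: "inj_on \<phi> {..<l}"
  proof (rule inj_onI)
    fix t1 t2 assume t: "t1 \<in> {..<l}" "t2 \<in> {..<l}" "\<phi> t1 = \<phi> t2"
    then have "sj ! t1 = sj ! t2" using inj nthJ unfolding \<phi>_def inj_on_def by auto
    then show "t1 = t2" using dist t len by (simp add: nth_eq_iff_index_eq)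
  qed
  have img: "\<phi> ` {..<l} = lin_form C ` J"
  proof -
    have "(\<lambda>t. sj ! t) ` {..<l} = J" using setsj len by (auto simp: set_conv_nth)
    then show ?thesis unfolding \<phi>_def by (metis image_image)
  qed
  define h where "h s = a (the_inv_into {..<l} \<phi> s)" for s
  have "(\<Sum>s\<in>\<phi> ` {..<l}. h s * s) = (\<Sum>t<l. h (\<phi> t) * \<phi> t)"
    by (rule sum.reindex[OF injphi, unfolded comp_def])
  also have "\<dots> = (\<Sum>t<l. a t * \<phi> t)"
    unfolding h_def using the_inv_into_f_f[OF injphi] by simp
  finally have eq: "(\<Sum>s\<in>lin_form C ` J. h s * s) = (\<Sum>t<l. a t * lin_form C (sj ! t))"
    unfolding img \<phi>_def .
  have hz: "\<forall>s\<in>lin_form C ` J. h s \<in> zpolys l"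
  proof
    fix s assume "s \<in> lin_form C ` J"
    then obtain t where "t < l" "s = \<phi> t" using img by (metis imageE lessThan_iff)
    then show "h s \<in> zpolys l" unfolding h_def using the_inv_into_f_f[OF injphi] a by simp
  qed
  show ?thesis unfolding ideal_gen_def sj_def[symmetric] using eq hz
    by (intro CollectI exI[of _ h] conjI) auto
qed

lemma dvar_in_ideal:
  assumes C: "dim_row C = l" and fin: "finite J" and cJ: "card J = l" and inj: "inj_on (lin_form C) J"
  shows "\<forall>k<l. Poly_Mapping.single 0 (det (col_submat C J)) * Var k \<in> ideal_gen l (lin_form C ` J)"
proof (intro allI impI)
  fix k assume k: "k < l"
  define sj where "sj = sorted_list_of_set J"
  define M where "M = col_submat C J"
  have Mc: "M \<in> carrier_mat l l" unfolding M_def col_submat_def using C cJ by simp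
  have Mi: "M $$ (i,t) = C $$ (i, sj ! t)" if "i < l" "t < l" for i t
    unfolding M_def col_submat_def sj_def using that C cJ by simp
  define Ad where "Ad = adj_mat M"
  have Adc: "Ad \<in> carrier_mat l l" and MA: "M * Ad = det M \<cdot>\<^sub>m 1\<^sub>m l" using adj_mat[OF Mc] unfolding Ad_def by auto
  have MAe: "(\<Sum>t<l. M $$ (i,t) * Ad $$ (t,k)) = (if i = k then det M else 0)" if "i < l" for i
  proof -
    have "(M * Ad) $$ (i,k) = (\<Sum>t<l. M $$ (i,t) * Ad $$ (t,k))" using mat_mult_entry[OF Mc Adc that k] .
    moreover have "(M * Ad) $$ (i,k) = (if i = k then det M else 0)" unfolding MA using that k by simp
    ultimately show ?thesis by simp
  qed
  define a where "a t = (Poly_Mapping.single 0 (Ad $$ (t,k)) :: zpoly)" for t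
  have az: "\<forall>t<l. a t \<in> zpolys l" unfolding a_def using zpolys_single zero_monos by blast
  have "(\<Sum>t<l. a t * lin_form C (sj ! t))
      = (\<Sum>t<l. \<Sum>i<l. Poly_Mapping.single (Poly_Mapping.single i 1) (Ad $$ (t,k) * C $$ (i, sj ! t)))"
    unfolding a_def lin_form_expand C by (simp add: sum_distrib_left mult_single)
  also have "\<dots> = (\<Sum>i<l. \<Sum>t<l. Poly_Mapping.single (Poly_Mapping.single i 1) (Ad $$ (t,k) * C $$ (i, sj ! t)))"
    by (rule sum.swap)
  also have "\<dots> = (\<Sum>i<l. Poly_Mapping.single (Poly_Mapping.single i 1) (\<Sum>t<l. M $$ (i,t) * Ad $$ (t,k)))"
    by (intro sum.cong refl) (simp add: single_sum Mi mult.commute)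
  also have "\<dots> = (\<Sum>i<l. if i = k then Poly_Mapping.single (Poly_Mapping.single i 1) (det M) else 0)"
    by (intro sum.cong refl) (simp add: MAe)
  also have "\<dots> = Poly_Mapping.single (Poly_Mapping.single k 1) (det M)"
    using k by (simp add: sum.delta)
  also have "\<dots> = Poly_Mapping.single 0 (det M) * Var k"
    unfolding Var_def by (simp add: mult_single)
  finally have "Poly_Mapping.single 0 (det M) * Var k = (\<Sum>t<l. a t * lin_form C (sj ! t))" by simp
  then show "Poly_Mapping.single 0 (det (col_submat C J)) * Var k \<in> ideal_gen l (lin_form C ` J)"
    using comb_in_ideal[OF fin cJ inj az] unfolding M_def sj_def by simp
qed

lemma det_nonzero_from_inter:
  assumes C: "dim_row C = l" and fin: "finite J" and cJ: "card J = l"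
    and inter: "{x. dim_vec x = l} \<inter> (\<Inter>i\<in>J. hyp C i) = {0\<^sub>v l}"
  shows "det (col_submat C J) \<noteq> 0"
proof
  assume d0: "det (col_submat C J) = 0"
  define sj where "sj = sorted_list_of_set J"
  define M where "M = col_submat C J"
  have len: "length sj = l" and setsj: "set sj = J" using fin cJ unfolding sj_def by auto
  have Mc: "M \<in> carrier_mat l l" unfolding M_def col_submat_def using C cJ by simp
  have Mi: "M $$ (i,t) = C $$ (i, sj ! t)" if "i < l" "t < l" for i t
    unfolding M_def col_submat_def sj_def using that C cJ by simp
  have "det (transpose_mat M) = 0" using d0 det_transpose[OF Mc] unfolding M_def by simp
  then obtain v where v: "v \<in> carrier_vec l" "v \<noteq> 0\<^sub>v l" "transpose_mat M *\<^sub>v v = 0\<^sub>v l"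
    using det_0_iff_vec_prod_zero[of "transpose_mat M" l] Mc by auto
  define x where "x = map_vec rat_of_int v"
  have xd: "dim_vec x = l" using v unfolding x_def by simp
  have vt: "(\<Sum>k<l. C $$ (k, sj ! t) * v $ k) = 0" if t: "t < l" for t
  proof -
    have "(transpose_mat M *\<^sub>v v) $ t = 0" using v(3) t by simp
    moreover have "(transpose_mat M *\<^sub>v v) $ t = (\<Sum>k<l. M $$ (k,t) * v $ k)"
      using Mc v(1) t by (simp add: scalar_prod_def lessThan_atLeast0)
    ultimately show ?thesis using Mi t by simp
  qed
  have "x \<in> hyp C i" if i: "i \<in> J" for i
  proof -
    obtain t where t: "t < l" "i = sj ! t" using i setsj len by (metis in_set_conv_nth)
    have "(\<Sum>k<l. of_int (C $$ (k, i)) * x $ k) = rat_of_int (\<Sum>k<l. C $$ (k, i) * v $ k)"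
      unfolding x_def using v(1) by (simp add: of_int_sum)
    also have "\<dots> = 0" using vt[OF t(1)] t(2) by simp
    finally show ?thesis unfolding hyp_def using xd C by simp
  qed
  then have "x \<in> {x. dim_vec x = l} \<inter> (\<Inter>i\<in>J. hyp C i)" using xd by auto
  then have x0: "x = 0\<^sub>v l" using inter by auto
  have "v = 0\<^sub>v l"
  proof (rule eq_vecI)
    fix k assume k: "k < dim_vec (0\<^sub>v l :: int vec)"
    then have "x $ k = 0" using x0 by simp
    then show "v $ k = 0\<^sub>v l $ k" using v(1) k unfolding x_def by simp
  next
    show "dim_vec v = dim_vec (0\<^sub>v l :: int vec)" using v(1) by simp
  qed
  then show False using v(2) by simp
qed

theorem proposition7p5:
  fixes l n :: nat and C :: "int mat" and ord :: "mono \<Rightarrow> mono \<Rightarrow> bool" and p :: nat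
  assumes "central_essential_arr l n C"
    and "term_order l ord"
    and "prime p"
    and "\<not> sigma_l_lucky l n C ord p"
  shows "int p dvd rho0 l n C"
proof -
  have Cc: "C \<in> carrier_mat l n" and injh: "inj_on (hyp C) {..<n}"
    using assms(1) unfolding central_essential_arr_def by auto
  have C: "dim_row C = l" using Cc by auto
  obtain J where J: "J \<subseteq> {..<n}" "card J = l" "{x. dim_vec x = l} \<inter> (\<Inter>i\<in>J. hyp C i) = {0\<^sub>v l}"
    "\<not> sigma_lucky l ord (ideal_gen l (lin_form C ` J)) p"
    using assms(4) unfolding sigma_l_lucky_def by blast
  obtain G g where G: "is_min_strong_GB l ord (ideal_gen l (lin_form C ` J)) G" "g \<in> G"
    "int p dvd lead_coeff_z ord g"
    using J(4) unfolding sigma_lucky_def by blast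
  have fin: "finite J" using J(1) finite_subset by blast
  have inj: "inj_on (lin_form C) J"
  proof (rule inj_onI)
    fix i i' assume ii: "i \<in> J" "i' \<in> J" "lin_form C i = lin_form C i'"
    have "C $$ (k,i) = C $$ (k,i')" if "k < l" for k
      using lookup_lin_form[of k C i] lookup_lin_form[of k C i'] ii(3) that C by simp
    then have "hyp C i = hyp C i'" unfolding hyp_def C by (auto intro!: sum.cong)
    then show "i = i'" using injh ii J(1) unfolding inj_on_def by blast
  qed
  have Sz: "lin_form C ` J \<subseteq> zpolys l" using lin_form_zpolys[OF C] by blast
  have Snc: "\<And>s. s \<in> lin_form C ` J \<Longrightarrow> 0 \<notin> Poly_Mapping.keys s" using lin_form_no_const by blast
  have pdet: "int p dvd det (col_submat C J)"
    using GB_core[OF assms(2) Sz Snc dvar_in_ideal[OF C fin J(2) inj] G] .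
  define M where "M = col_submat C J"
  have Mc: "M \<in> carrier_mat l l" unfolding M_def col_submat_def using C J(2) by simp
  have pr: "prime (int p)" using assms(3) by simp
  show ?thesis
  proof (cases "l = 0")
    case True
    then have "M = 1\<^sub>m 0" using Mc by (intro eq_matI) auto
    then have "det M = 1" by simp
    then have False using pdet pr unfolding M_def by (simp add: prime_int_iff)
    then show ?thesis ..
  next
    case False
    have dnz: "det M \<noteq> 0" unfolding M_def using det_nonzero_from_inter[OF C fin J(2) J(3)] .
    obtain e0 where "is_SNF_last M e0" using snf_last_exists[OF Mc _ dnz] False by auto
    then have S: "is_SNF_last M (e_of C J)" unfolding e_of_def M_def by (rule someI)
    have pe: "int p dvd e_of C J" using snf_last_dvd[OF S Mc dnz pr] pdet unfolding M_def by simp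
    have "J \<noteq> {}" using False J(2) by auto
    then have "e_of C J \<in> {e_of C J | J. J \<subseteq> {..<n} \<and> J \<noteq> {} \<and> card J \<le> l}" using J(1,2) by auto
    then have "e_of C J dvd rho0 l n C" unfolding rho0_def by (rule dvd_Lcm)
    then show ?thesis using pe by (meson dvd_trans)
  qed
qed

end
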